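(* For $\theta\in(0,1)$ define $P_0(\theta)=1-\theta$ and, for integers $r\ge 1$, \[ P_r(\theta)=r(1-\theta)\sum_{i=r}^{\infty}\frac{\theta^i}{i}. \] Then for each $r\ge 1$, the points $\theta\in(0,1)$ at which $P_{r-1}(\theta)=P_r(\theta)$ are exactly the points at which $\frac{d}{d\theta}P_r(\theta)=0$; that is, the intersection of $P_{r-1}$ and $P_r$ coincides with the location of the maximum value of $P_r$ on $(0,1)$. *)

theory Defs
  imports Complex_Main
begin

definition P :: "nat \<Rightarrow> real \<Rightarrow> real" where
  "P r t = (if r = 0 then 1 - t
            else real r * (1 - t) * (\<Sum>i. t ^ (i + r) / real (i + r)))"

end

theory Submission
  imports Defs "HOL-Analysis.Analysis"
begin

definition Q :: "nat \<Rightarrow> real \<Rightarrow> real" where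
  "Q r x = (\<Sum>i<r. x ^ i / real i)"

lemma S_form:
  assumes "\<bar>x\<bar> < 1"
  shows "(\<Sum>i. x ^ (i + r) / real (i + r)) = - ln (1 - x) - Q r x"
proof -
  have "(\<lambda>n. - ((-(-x))^n) / of_nat n) sums ln (1 + (-x))"
    using ln_series'[of "-x"] assms by simp
  hence "(\<lambda>n. - (x^n / real n)) sums ln (1 - x)" by simp
  hence "(\<lambda>n. x^n / real n) sums (- ln (1 - x))"
    using sums_minus by fastforce
  from sums_split_initial_segment[OF this, of r]
  show ?thesis unfolding Q_def using sums_unique by (metis (no_types, lifting))
qed

lemma P_form:
  assumes "r \<ge> 1" "\<bar>x\<bar> < 1"
  shows "P r x = real r * (1 - x) * (- ln (1 - x) - Q r x)"
  using assms S_form[OF assms(2)] unfolding P_def by simp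

definition E :: "nat \<Rightarrow> real \<Rightarrow> real" where
  "E r t = (\<Sum>i<r. if i = 0 then 0 else t ^ (i - 1))"

lemma geo_aux:
  fixes t :: real
  shows "(1 - t) * E (Suc n) t = 1 - t ^ n"
proof (induction n)
  case 0 then show ?case by (simp add: E_def)
next
  case (Suc n)
  have "E (Suc (Suc n)) t = E (Suc n) t + t ^ n"
    unfolding E_def by (subst sum.lessThan_Suc) simp
  then have "(1 - t) * E (Suc (Suc n)) t = (1 - t) * E (Suc n) t + (1 - t) * t ^ n"
    by (simp add: distrib_left)
  also have "\<dots> = 1 - t ^ Suc n" using Suc by (simp add: algebra_simps)
  finally show ?case .
qed

lemma term_deriv:
  "((\<lambda>x. x ^ i / real i) has_real_derivative (if i = 0 then 0 else t ^ (i - 1))) (at t)"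
proof (cases "i = 0")
  case True then show ?thesis by simp
next
  case False
  have "((\<lambda>x. x ^ i / real i) has_real_derivative (real i * t ^ (i - 1) / real i)) (at t)"
    by (auto intro!: derivative_eq_intros)
  then show ?thesis using False by simp
qed

lemma Q_deriv:
  "(Q r has_real_derivative E r t) (at t)"
  unfolding Q_def[abs_def] E_def
  by (rule DERIV_sum, rule term_deriv)

theorem lemma3p1:
  fixes r :: nat and t :: real
  assumes "r \<ge> 1" and "0 < t" and "t < 1"
  shows "P (r - 1) t = P r t \<longleftrightarrow> (P r has_real_derivative 0) (at t)"
proof -
  define S where "S = - ln (1 - t) - Q r t"
  obtain m where m: "r = Suc m" using assms(1) by (cases r) auto
  have sumid: "(1 - t) * E r t = 1 - t ^ m"
    using geo_aux m by simp
  define D where "D = real r * (- S + t ^ m)"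
  have G: "((\<lambda>x. real r * (1 - x) * (- ln (1 - x) - Q r x)) has_real_derivative D) (at t)"
  proof -
    have "((\<lambda>x. real r * (1 - x) * (- ln (1 - x) - Q r x)) has_real_derivative
        real r * (- 1) * (- ln (1 - t) - Q r t) + real r * (1 - t) * (- (- 1 / (1 - t)) - E r t)) (at t)"
      using assms
      by (auto intro!: derivative_eq_intros Q_deriv)
    moreover have "real r * (- 1) * (- ln (1 - t) - Q r t) + real r * (1 - t) * (- (- 1 / (1 - t)) - E r t) = D"
    proof -
      have "1 - t \<noteq> 0" using assms by simp
      hence "real r * (1 - t) * (- (- 1 / (1 - t)) - E r t) = real r * (1 - (1 - t) * E r t)"
        by (simp add: field_simps)
      also have "\<dots> = real r * t ^ m" using sumid by simp
      finally show ?thesis unfolding D_def S_def by (simp add: algebra_simps)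
    qed
    ultimately show ?thesis by simp
  qed
  have PD: "(P r has_real_derivative D) (at t)"
    apply (rule has_field_derivative_transform_within_open[OF G, of "{-1<..<1}"])
    using assms by (auto simp: P_form)
  have iff1: "(P r has_real_derivative 0) (at t) \<longleftrightarrow> D = 0"
    using PD DERIV_unique by metis
  have Pr: "P r t = real r * (1 - t) * S"
    using P_form assms unfolding S_def by simp
  have Prm: "P (r - 1) t = (1 - t) * (real m * S + t ^ m)"
  proof (cases m)
    case 0
    then show ?thesis using m by (simp add: P_def)
  next
    case (Suc k)
    have "Q r t = Q m t + t ^ m / real m" using m by (simp add: Q_def)
    moreover have "P m t = real m * (1 - t) * (- ln (1 - t) - Q m t)"
      using P_form[of m t] Suc assms by simp
    ultimately have "P m t = real m * (1 - t) * (S + t ^ m / real m)"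
      unfolding S_def by simp
    moreover have "real m * (S + t ^ m / real m) = real m * S + t ^ m"
      using Suc by (simp add: field_simps)
    ultimately have "P m t = (1 - t) * (real m * S + t ^ m)"
      by (metis mult.commute mult.left_commute)
    then show ?thesis using m by simp
  qed
  have "P (r - 1) t = P r t \<longleftrightarrow> (1 - t) * (t ^ m - S) = 0"
    using Pr Prm m by (auto simp: algebra_simps)
  also have "\<dots> \<longleftrightarrow> D = 0"
    using assms m unfolding D_def by auto
  finally show ?thesis using iff1 by simp
qed

end
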